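(* Let $k\ge 2$ and let $G$ be a $k$-tree. Then every vertex of $G$ has mindegree at least $k-1$. Moreover, $G$ has at least $k+1$ vertices of mindegree exactly $k-1$, unless $G$ is isomorphic to the symmetric complete graph $\overleftrightarrow{K}_k$ or $G$ is a symmetric path of odd length (in which case $k=2$).
   Context: Digraphs have no loops and no parallel arcs, but may contain digons. $d_{min}(v)=\min(d^+(v),d^-(v))$ is the mindegree of $v$; $\Delta_{max}(G)=\max_v\max(d^+(v),d^-(v))$. A symmetric cycle / complete graph / path is obtained from the corresponding undirected graph by replacing each edge by a digon. $\mathcal B_1$ is the set of directed cycles (including digons), $\mathcal B_2$ the set of symmetric cycles of odd length, and for $j\ge 3$, $\mathcal B_j=\{\overleftrightarrow K_{j+1}\}$ (all up to isomorphism). A digraph $G$ is a direct composition of digraphs $G_1,G_2$ on vertices $v_1\in V(G_1)$, $v_2\in V(G_2)$ if it is obtained from the disjoint union of $G_1$ and $G_2$ by adding exactly one arc between $v_1$ and $v_2$ (either $v_1v_2$ or $v_2v_1$). $G$ is a cyclic composition of $G_1,\dots,G_\ell$ ($\ell\ge 2$) on vertices $v_i\in V(G_i)$ if it is obtained from their disjoint union by adding the arcs $v_iv_{i+1}$ for $i=1,\dots,\ell-1$ and $v_\ell v_1$. A digraph $G$ is a $k$-tree if $\Delta_{max}(G)\le k$ and it can be built by the rules: every member of $\mathcal B_{k-1}$ is a $k$-tree; a direct or cyclic composition of $k$-trees is a $k$-tree. *)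

theory Defs
  imports Main
begin

text \<open>A digraph is a pair (V, A) of a vertex set and an arc set. Using a set of
  ordered pairs excludes parallel arcs; loops are excluded by dg_wf; digons
  (both (u,v) and (v,u)) are allowed.\<close>

type_synonym 'a digraph = "'a set \<times> ('a \<times> 'a) set"

definition verts :: "'a digraph \<Rightarrow> 'a set" where "verts G = fst G"
definition arcs :: "'a digraph \<Rightarrow> ('a \<times> 'a) set" where "arcs G = snd G"

definition dg_wf :: "'a digraph \<Rightarrow> bool" where
  "dg_wf G \<longleftrightarrow> finite (verts G) \<and> arcs G \<subseteq> verts G \<times> verts G
     \<and> (\<forall>v. (v, v) \<notin> arcs G)"

definition outdeg :: "'a digraph \<Rightarrow> 'a \<Rightarrow> nat" where
  "outdeg G v = card {w. (v, w) \<in> arcs G}"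

definition indeg :: "'a digraph \<Rightarrow> 'a \<Rightarrow> nat" where
  "indeg G v = card {u. (u, v) \<in> arcs G}"

definition mindeg :: "'a digraph \<Rightarrow> 'a \<Rightarrow> nat" where
  "mindeg G v = min (outdeg G v) (indeg G v)"

definition Delta_max :: "'a digraph \<Rightarrow> nat" where
  "Delta_max G = Max (insert 0 ((\<lambda>v. max (outdeg G v) (indeg G v)) ` verts G))"

definition dg_iso :: "'a digraph \<Rightarrow> 'b digraph \<Rightarrow> bool" where
  "dg_iso G H \<longleftrightarrow> (\<exists>f. bij_betw f (verts G) (verts H) \<and>
     (\<forall>u\<in>verts G. \<forall>v\<in>verts G. (u, v) \<in> arcs G \<longleftrightarrow> (f u, f v) \<in> arcs H))"

definition dicycle :: "nat \<Rightarrow> nat digraph" where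
  "dicycle n = ({0..<n}, {(i, (i + 1) mod n) | i. i < n})"

definition symcycle :: "nat \<Rightarrow> nat digraph" where
  "symcycle n = ({0..<n}, {(i, (i + 1) mod n) | i. i < n} \<union> {((i + 1) mod n, i) | i. i < n})"

definition symK :: "nat \<Rightarrow> nat digraph" where
  "symK n = ({0..<n}, {(i, j). i < n \<and> j < n \<and> i \<noteq> j})"

text \<open>Symmetric path of length n (n arcs-pairs, n+1 vertices).\<close>
definition sympath :: "nat \<Rightarrow> nat digraph" where
  "sympath n = ({0..n}, {(i, i + 1) | i. i < n} \<union> {(i + 1, i) | i. i < n})"

definition in_B :: "nat \<Rightarrow> 'a digraph \<Rightarrow> bool" where
  "in_B j G \<longleftrightarrow>
     (j = 1 \<and> (\<exists>n\<ge>2. dg_iso G (dicycle n))) \<or>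
     (j = 2 \<and> (\<exists>n. odd n \<and> n \<ge> 3 \<and> dg_iso G (symcycle n))) \<or>
     (j \<ge> 3 \<and> dg_iso G (symK (j + 1)))"

text \<open>k-trees. Compositions are of vertex-disjoint digraphs; a cyclic composition
  of l >= 2 parts is given by indexed families over {0..<l}.\<close>
inductive ktree :: "nat \<Rightarrow> 'a digraph \<Rightarrow> bool" for k :: nat where
  base: "\<lbrakk> dg_wf G; in_B (k - 1) G; Delta_max G \<le> k \<rbrakk> \<Longrightarrow> ktree k G"
| direct: "\<lbrakk> ktree k (V1, A1); ktree k (V2, A2); V1 \<inter> V2 = {};
             v1 \<in> V1; v2 \<in> V2; e = (v1, v2) \<or> e = (v2, v1);
             Delta_max (V1 \<union> V2, A1 \<union> A2 \<union> {e}) \<le> k \<rbrakk>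
           \<Longrightarrow> ktree k (V1 \<union> V2, A1 \<union> A2 \<union> {e})"
| cyclic: "\<lbrakk> (l::nat) \<ge> 2; \<forall>i<l. ktree k (Vs i, As i); \<forall>i<l. vs i \<in> Vs i;
             \<forall>i<l. \<forall>j<l. i \<noteq> j \<longrightarrow> Vs i \<inter> Vs j = {};
             G = ((\<Union>i<l. Vs i),
                  (\<Union>i<l. As i) \<union> {(vs i, vs ((i + 1) mod l)) | i. i < l});
             Delta_max G \<le> k \<rbrakk>
           \<Longrightarrow> ktree k G"

end

theory Submission
  imports Defs
begin


definition iso_via :: "('a \<Rightarrow> 'b) \<Rightarrow> 'a digraph \<Rightarrow> 'b digraph \<Rightarrow> bool" where
  "iso_via f G H \<longleftrightarrow> bij_betw f (verts G) (verts H) \<and>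
     (\<forall>u\<in>verts G. \<forall>v\<in>verts G. (u, v) \<in> arcs G \<longleftrightarrow> (f u, f v) \<in> arcs H)"

lemma verts_pair[simp]: "verts (V, A) = V" by (simp add: verts_def)
lemma arcs_pair[simp]: "arcs (V, A) = A" by (simp add: arcs_def)

lemma dg_iso_via: "dg_iso G H \<longleftrightarrow> (\<exists>f. iso_via f G H)"
  unfolding dg_iso_def iso_via_def by simp

definition wfa :: "'a digraph \<Rightarrow> bool" where
  "wfa G \<longleftrightarrow> finite (verts G) \<and> arcs G \<subseteq> verts G \<times> verts G"

lemma dg_wf_wfa: "dg_wf G \<Longrightarrow> wfa G" by (simp add: dg_wf_def wfa_def)

lemma iso_out:
  assumes "iso_via f G H" "wfa G" "wfa H" "v \<in> verts G"
  shows "outdeg G v = outdeg H (f v)"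
proof -
  let ?S = "{w. (v,w) \<in> arcs G}" and ?T = "{w. (f v, w) \<in> arcs H}"
  have bij: "bij_betw f (verts G) (verts H)" and ar: "\<forall>u\<in>verts G. \<forall>w\<in>verts G. (u, w) \<in> arcs G \<longleftrightarrow> (f u, f w) \<in> arcs H"
    using assms(1) by (auto simp: iso_via_def)
  have S: "?S \<subseteq> verts G" using assms(2) by (auto simp: wfa_def)
  have "f ` ?S = ?T"
  proof
    show "f ` ?S \<subseteq> ?T" using ar S assms(4) by auto
    show "?T \<subseteq> f ` ?S"
    proof
      fix w' assume "w' \<in> ?T"
      then have "w' \<in> verts H" using assms(3) by (auto simp: wfa_def)
      then obtain w where w: "w \<in> verts G" "w' = f w" using bij by (auto simp: bij_betw_def)
      then show "w' \<in> f ` ?S" using ar assms(4) \<open>w' \<in> ?T\<close> by auto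
    qed
  qed
  moreover have "inj_on f ?S" using bij S by (auto simp: bij_betw_def intro: inj_on_subset)
  then have "card (f ` ?S) = card ?S" by (rule card_image)
  ultimately show ?thesis unfolding outdeg_def by simp
qed

lemma iso_in:
  assumes "iso_via f G H" "wfa G" "wfa H" "v \<in> verts G"
  shows "indeg G v = indeg H (f v)"
proof -
  let ?S = "{w. (w,v) \<in> arcs G}" and ?T = "{w. (w, f v) \<in> arcs H}"
  have bij: "bij_betw f (verts G) (verts H)" and ar: "\<forall>u\<in>verts G. \<forall>w\<in>verts G. (u, w) \<in> arcs G \<longleftrightarrow> (f u, f w) \<in> arcs H"
    using assms(1) by (auto simp: iso_via_def)
  have S: "?S \<subseteq> verts G" using assms(2) by (auto simp: wfa_def)
  have "f ` ?S = ?T"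
  proof
    show "f ` ?S \<subseteq> ?T" using ar S assms(4) by auto
    show "?T \<subseteq> f ` ?S"
    proof
      fix w' assume "w' \<in> ?T"
      then have "w' \<in> verts H" using assms(3) by (auto simp: wfa_def)
      then obtain w where w: "w \<in> verts G" "w' = f w" using bij by (auto simp: bij_betw_def)
      then show "w' \<in> f ` ?S" using ar assms(4) \<open>w' \<in> ?T\<close> by auto
    qed
  qed
  moreover have "inj_on f ?S" using bij S by (auto simp: bij_betw_def intro: inj_on_subset)
  then have "card (f ` ?S) = card ?S" by (rule card_image)
  ultimately show ?thesis unfolding indeg_def by simp
qed

lemma iso_card:
  assumes "iso_via f G H" "\<And>v. v \<in> verts G \<Longrightarrow> P v \<longleftrightarrow> Q (f v)"
  shows "card {v\<in>verts G. P v} = card {w\<in>verts H. Q w}"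
proof -
  have bij: "bij_betw f (verts G) (verts H)" using assms(1) by (simp add: iso_via_def)
  have "f ` {v\<in>verts G. P v} = {w\<in>verts H. Q w}"
  proof
    show "f ` {v\<in>verts G. P v} \<subseteq> {w\<in>verts H. Q w}" using bij assms(2) by (auto simp: bij_betw_def)
    show "{w\<in>verts H. Q w} \<subseteq> f ` {v\<in>verts G. P v}"
    proof
      fix w assume w: "w \<in> {w\<in>verts H. Q w}"
      then obtain v where "v \<in> verts G" "w = f v" using bij by (auto simp: bij_betw_def)
      then show "w \<in> f ` {v\<in>verts G. P v}" using w assms(2) by auto
    qed
  qed
  moreover have "inj_on f {v\<in>verts G. P v}" using bij by (auto simp: bij_betw_def intro: inj_on_subset)
  then have "card (f ` {v\<in>verts G. P v}) = card {v\<in>verts G. P v}" by (rule card_image)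
  ultimately show ?thesis by simp
qed

lemma iso_sym:
  assumes "iso_via f G H" "wfa G" "\<forall>a b. (a,b)\<in>arcs H \<longrightarrow> (b,a) \<in> arcs H"
  shows "\<forall>a b. (a,b)\<in>arcs G \<longrightarrow> (b,a) \<in> arcs G"
  using assms unfolding iso_via_def wfa_def by blast

lemma sympath_arcs: "arcs (sympath n) = {(i,j). i \<le> n \<and> j \<le> n \<and> (j = Suc i \<or> i = Suc j)}"
  by (auto simp: sympath_def arcs_def)

lemma sympath_verts: "verts (sympath n) = {0..n}"
  by (simp add: sympath_def verts_def)

lemma sympath_wfa: "wfa (sympath n)"
  by (auto simp: wfa_def sympath_arcs sympath_verts)

lemma sympath_sym: "\<forall>a b. (a,b)\<in>arcs (sympath n) \<longrightarrow> (b,a) \<in> arcs (sympath n)"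
  by (auto simp: sympath_arcs)

lemma sp_outs: "{w. (i,w)\<in>arcs (sympath n)} = {w. i \<le> n \<and> w\<le>n \<and> (w = Suc i \<or> i = Suc w)}"
  by (auto simp: sympath_arcs)
lemma sp_ins: "{w. (w,i)\<in>arcs (sympath n)} = {w. i \<le> n \<and> w\<le>n \<and> (w = Suc i \<or> i = Suc w)}"
  by (auto simp: sympath_arcs)

lemma sp_mid: assumes "0 < i" "i < n" shows "outdeg (sympath n) i = 2" "indeg (sympath n) i = 2"
proof -
  have "{w. i \<le> n \<and> w\<le>n \<and> (w = Suc i \<or> i = Suc w)} = {i - 1, Suc i}" using assms by auto
  then show "outdeg (sympath n) i = 2" "indeg (sympath n) i = 2"
    unfolding outdeg_def indeg_def sp_outs sp_ins using assms by auto
qed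

lemma sp_end: assumes "0 < n" shows "outdeg (sympath n) 0 = 1" "indeg (sympath n) 0 = 1"
  "outdeg (sympath n) n = 1" "indeg (sympath n) n = 1"
proof -
  have "{w. 0 \<le> n \<and> w\<le>n \<and> (w = Suc 0 \<or> 0 = Suc w)} = {1}" using assms by auto
  then show "outdeg (sympath n) 0 = 1" "indeg (sympath n) 0 = 1"
    unfolding outdeg_def indeg_def sp_outs sp_ins by auto
  have "{w. n \<le> n \<and> w\<le>n \<and> (w = Suc n \<or> n = Suc w)} = {n - 1}" using assms by auto
  then show "outdeg (sympath n) n = 1" "indeg (sympath n) n = 1"
    unfolding outdeg_def indeg_def sp_outs sp_ins by auto
qed

lemma symK_verts: "verts (symK k) = {0..<k}" by (simp add: symK_def verts_def)
lemma symK_arcs: "arcs (symK k) = {(i, j). i < k \<and> j < k \<and> i \<noteq> j}" by (simp add: symK_def arcs_def)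
lemma symK_wfa: "wfa (symK k)" by (auto simp: wfa_def symK_verts symK_arcs)
lemma symK_sym: "\<forall>a b. (a,b)\<in>arcs (symK k) \<longrightarrow> (b,a) \<in> arcs (symK k)" by (auto simp: symK_arcs)
lemma symK_deg: assumes "i < k" shows "outdeg (symK k) i = k - 1" "indeg (symK k) i = k - 1"
proof -
  have "{w. (i,w) \<in> arcs (symK k)} = {0..<k} - {i}" "{w. (w,i) \<in> arcs (symK k)} = {0..<k} - {i}"
    using assms by (auto simp: symK_arcs)
  then show "outdeg (symK k) i = k - 1" "indeg (symK k) i = k - 1"
    unfolding outdeg_def indeg_def using assms by auto
qed

lemma symK2: "symK 2 = sympath 1"
  by (auto simp: symK_def sympath_def)

lemma suc_mod: "j < n \<Longrightarrow> Suc j mod n = (if Suc j = n then 0 else Suc j)"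
  by (simp add: mod_Suc)

lemma pred_set: assumes "i < n" shows "{j. j < n \<and> Suc j mod n = i} = {if i = 0 then n - 1 else i - 1}"
proof (intro set_eqI iffI)
  fix j assume "j \<in> {j. j < n \<and> Suc j mod n = i}"
  then have "j < n" "Suc j mod n = i" by auto
  then show "j \<in> {if i = 0 then n - 1 else i - 1}" using suc_mod[of j n] by (auto split: if_splits)
next
  fix j assume "j \<in> {if i = 0 then n - 1 else i - 1}"
  then show "j \<in> {j. j < n \<and> Suc j mod n = i}" using assms suc_mod[of j n] by (auto split: if_splits)
qed

lemma dicycle_verts: "verts (dicycle n) = {0..<n}" by (simp add: dicycle_def verts_def)
lemma dicycle_arcs: "arcs (dicycle n) = {(i, Suc i mod n) | i. i < n}" by (simp add: dicycle_def arcs_def)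
lemma dicycle_wfa: "wfa (dicycle n)" by (auto simp: wfa_def dicycle_verts dicycle_arcs)
lemma dicycle_deg: assumes "i < n" shows "outdeg (dicycle n) i = 1" "indeg (dicycle n) i = 1"
proof -
  have "{w. (i,w) \<in> arcs (dicycle n)} = {Suc i mod n}" using assms by (auto simp: dicycle_arcs)
  then show "outdeg (dicycle n) i = 1" by (simp add: outdeg_def)
  have "{w. (w,i) \<in> arcs (dicycle n)} = {j. j < n \<and> Suc j mod n = i}" by (auto simp: dicycle_arcs)
  then show "indeg (dicycle n) i = 1" using pred_set[OF assms] by (simp add: indeg_def)
qed

lemma symcycle_verts: "verts (symcycle n) = {0..<n}" by (simp add: symcycle_def verts_def)
lemma symcycle_arcs: "arcs (symcycle n) = {(i, Suc i mod n) | i. i < n} \<union> {(Suc i mod n, i) | i. i < n}"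
  by (simp add: symcycle_def arcs_def)
lemma symcycle_wfa: "wfa (symcycle n)" by (auto simp: wfa_def symcycle_verts symcycle_arcs)
lemma symcycle_deg: assumes "i < n" "3 \<le> n" shows "outdeg (symcycle n) i = 2" "indeg (symcycle n) i = 2"
proof -
  have ne: "Suc i mod n \<noteq> (if i = 0 then n - 1 else i - 1)" using assms suc_mod[of i n] by auto
  have "{w. (i,w) \<in> arcs (symcycle n)} = {Suc i mod n} \<union> {j. j < n \<and> Suc j mod n = i}"
    using assms by (auto simp: symcycle_arcs)
  then show "outdeg (symcycle n) i = 2" using pred_set[OF assms(1)] ne by (simp add: outdeg_def)
  have "{w. (w,i) \<in> arcs (symcycle n)} = {Suc i mod n} \<union> {j. j < n \<and> Suc j mod n = i}"
    using assms by (auto simp: symcycle_arcs)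
  then show "indeg (symcycle n) i = 2" using pred_set[OF assms(1)] ne by (simp add: indeg_def)
qed

lemma dicycle2: "dicycle 2 = symK 2"
proof -
  have "arcs (dicycle 2) = arcs (symK 2)"
    unfolding dicycle_arcs symK_arcs
    by (auto simp: less_2_cases_iff)
  then show ?thesis by (simp add: dicycle_def symK_def arcs_def)
qed

lemma three_cases: "(i::nat) < 3 \<Longrightarrow> i = 0 \<or> i = 1 \<or> i = 2" by auto

lemma symcycle3: "symcycle 3 = symK 3"
proof -
  have "arcs (symcycle 3) = arcs (symK 3)"
    unfolding symcycle_arcs symK_arcs
  proof (intro set_eqI iffI)
    fix x assume "x \<in> {(i, Suc i mod 3) | i. i < (3::nat)} \<union> {(Suc i mod 3, i) | i. i < 3}"
    then show "x \<in> {(i, j). i < 3 \<and> j < 3 \<and> i \<noteq> j}" by (auto dest!: three_cases)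
  next
    fix x assume "x \<in> {(i, j). i < (3::nat) \<and> j < 3 \<and> i \<noteq> j}"
    then obtain i j where x: "x = (i,j)" "i < 3" "j < 3" "i \<noteq> j" by auto
    then show "x \<in> {(i, Suc i mod 3) | i. i < (3::nat)} \<union> {(Suc i mod 3, i) | i. i < 3}"
      using three_cases[OF x(2)] three_cases[OF x(3)] by auto
  qed
  then show ?thesis by (simp add: symcycle_def symK_def arcs_def)
qed

definition low :: "nat \<Rightarrow> 'a digraph \<Rightarrow> 'a set" where
  "low k G = {v\<in>verts G. mindeg G v = k - 1}"

definition Exc :: "nat \<Rightarrow> 'a digraph \<Rightarrow> bool" where
  "Exc k G \<longleftrightarrow> dg_iso G (symK k) \<or> (k = 2 \<and> (\<exists>n. odd n \<and> dg_iso G (sympath n)))"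

lemma iso_regular:
  assumes "iso_via f G H" "wfa G" "wfa H" "\<forall>w\<in>verts H. outdeg H w = d \<and> indeg H w = d"
  shows "(\<forall>v\<in>verts G. outdeg G v = d \<and> indeg G v = d) \<and> card {v\<in>verts G. mindeg G v = d} = card (verts H)"
proof -
  have fv: "\<And>v. v \<in> verts G \<Longrightarrow> f v \<in> verts H" using assms(1) by (auto simp: iso_via_def bij_betw_def)
  have 1: "\<forall>v\<in>verts G. outdeg G v = d \<and> indeg G v = d"
    using iso_out[OF assms(1-3)] iso_in[OF assms(1-3)] fv assms(4) by auto
  have "card {v\<in>verts G. mindeg G v = d} = card {w\<in>verts H. True}"
    by (rule iso_card[OF assms(1)]) (use 1 in \<open>auto simp: mindeg_def\<close>)
  then show ?thesis using 1 by simp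
qed

lemma iso_mindeg:
  assumes "iso_via f G H" "wfa G" "wfa H" "v \<in> verts G"
  shows "mindeg G v = mindeg H (f v)"
  using iso_out[OF assms] iso_in[OF assms] by (simp add: mindeg_def)

lemma Exc_props:
  assumes "dg_wf G" "Exc k G" "k \<ge> 2"
  shows "k \<le> card (low k G) \<and> (\<forall>a b. (a,b)\<in>arcs G \<longrightarrow> (b,a)\<in>arcs G)"
proof -
  have wG: "wfa G" using assms(1) by (rule dg_wf_wfa)
  show ?thesis using assms(2) unfolding Exc_def
  proof
    assume "dg_iso G (symK k)"
    then obtain f where f: "iso_via f G (symK k)" by (auto simp: dg_iso_via)
    have "\<forall>w\<in>verts (symK k). outdeg (symK k) w = k - 1 \<and> indeg (symK k) w = k - 1"
      by (auto simp: symK_verts symK_deg)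
    from iso_regular[OF f wG symK_wfa this] have "card (low k G) = k"
      by (simp add: low_def symK_verts)
    moreover have "\<forall>a b. (a,b)\<in>arcs G \<longrightarrow> (b,a)\<in>arcs G" by (rule iso_sym[OF f wG symK_sym])
    ultimately show ?thesis by simp
  next
    assume "k = 2 \<and> (\<exists>n. odd n \<and> dg_iso G (sympath n))"
    then obtain n f where k2: "k = 2" and n: "odd n" and f: "iso_via f G (sympath n)" by (auto simp: dg_iso_via)
    have n0: "0 < n" using n by (cases n) auto
    have "card (low k G) = card {w\<in>verts (sympath n). mindeg (sympath n) w = 1}"
      unfolding low_def k2 by (rule iso_card[OF f]) (use iso_mindeg[OF f wG sympath_wfa] in auto)
    moreover have sub: "{0, n} \<subseteq> {w\<in>verts (sympath n). mindeg (sympath n) w = 1}"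
      using sp_end[OF n0] by (auto simp: sympath_verts mindeg_def)
    moreover have c2: "card {0, n} = 2" using n0 by simp
    moreover have fin: "finite {w\<in>verts (sympath n). mindeg (sympath n) w = 1}" by (simp add: sympath_verts)
    ultimately have "2 \<le> card (low k G)" using card_mono[OF fin sub] by linarith
    moreover have "\<forall>a b. (a,b)\<in>arcs G \<longrightarrow> (b,a)\<in>arcs G" by (rule iso_sym[OF f wG sympath_sym])
    ultimately show ?thesis using k2 by simp
  qed
qed

lemma Exc2: assumes "Exc 2 G" shows "\<exists>n. odd n \<and> dg_iso G (sympath n)"
proof -
  have "dg_iso G (sympath 1) \<or> (\<exists>n. odd n \<and> dg_iso G (sympath n))"
    using assms unfolding Exc_def symK2 by simp
  then show ?thesis
  proof
    assume "dg_iso G (sympath 1)" then show ?thesis by (intro exI[of _ 1]) simp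
  qed simp
qed

lemma base_case:
  assumes "dg_wf G" "in_B (k - 1) G" "k \<ge> 2"
  shows "(\<forall>v\<in>verts G. k - 1 \<le> outdeg G v \<and> k - 1 \<le> indeg G v) \<and> (k + 1 \<le> card (low k G) \<or> Exc k G)"
proof -
  have wG: "wfa G" using assms(1) by (rule dg_wf_wfa)
  consider (c1) "k = 2" "\<exists>n\<ge>2. dg_iso G (dicycle n)"
    | (c2) "k = 3" "\<exists>n. odd n \<and> n \<ge> 3 \<and> dg_iso G (symcycle n)"
    | (c3) "k \<ge> 4" "dg_iso G (symK k)"
  proof -
    have "k = 2 \<or> k = 3 \<or> k \<ge> 4" using assms(3) by arith
    moreover have "k = 2 \<Longrightarrow> \<exists>n\<ge>2. dg_iso G (dicycle n)"
      using assms(2) unfolding in_B_def by simp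
    moreover have "k = 3 \<Longrightarrow> \<exists>n. odd n \<and> n \<ge> 3 \<and> dg_iso G (symcycle n)"
      using assms(2) unfolding in_B_def by simp
    moreover have "k \<ge> 4 \<Longrightarrow> dg_iso G (symK k)"
    proof -
      assume k4: "k \<ge> 4"
      then have "k - 1 \<noteq> 1" "k - 1 \<noteq> 2" "k - 1 + 1 = k" by arith+
      then show ?thesis using assms(2) unfolding in_B_def by simp
    qed
    ultimately show ?thesis using that by blast
  qed
  then show ?thesis
  proof cases
    case c1
    then obtain n f where n: "n \<ge> 2" and f: "iso_via f G (dicycle n)" by (auto simp: dg_iso_via)
    have "\<forall>w\<in>verts (dicycle n). outdeg (dicycle n) w = 1 \<and> indeg (dicycle n) w = 1"
      by (auto simp: dicycle_verts dicycle_deg)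
    from iso_regular[OF f wG dicycle_wfa this] c1
    have r: "(\<forall>v\<in>verts G. k - 1 \<le> outdeg G v \<and> k - 1 \<le> indeg G v)" "card (low k G) = n"
      by (auto simp: low_def dicycle_verts)
    show ?thesis
    proof (cases "n = 2")
      case True
      then have "iso_via f G (symK 2)" using f dicycle2 by simp
      then have "Exc k G" unfolding Exc_def dg_iso_via using c1 by blast
      then show ?thesis using r by simp
    next
      case False then show ?thesis using r n c1 by simp
    qed
  next
    case c2
    then obtain n f where n: "odd n" "n \<ge> 3" and f: "iso_via f G (symcycle n)" by (auto simp: dg_iso_via)
    have "\<forall>w\<in>verts (symcycle n). outdeg (symcycle n) w = 2 \<and> indeg (symcycle n) w = 2"
      using n by (auto simp: symcycle_verts symcycle_deg)
    from iso_regular[OF f wG symcycle_wfa this] c2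
    have r: "(\<forall>v\<in>verts G. k - 1 \<le> outdeg G v \<and> k - 1 \<le> indeg G v)" "card (low k G) = n"
      by (auto simp: low_def symcycle_verts)
    show ?thesis
    proof (cases "n = 3")
      case True
      then have "iso_via f G (symK 3)" using f symcycle3 by simp
      then have "Exc k G" unfolding Exc_def dg_iso_via using c2 by blast
      then show ?thesis using r by simp
    next
      case False
      then have "n \<noteq> 4" "n \<ge> 3" using n by auto
      then have "n \<ge> 5" using False by linarith
      then show ?thesis using r c2 by simp
    qed
  next
    case c3
    then obtain f where f: "iso_via f G (symK k)" by (auto simp: dg_iso_via)
    have "\<forall>w\<in>verts (symK k). outdeg (symK k) w = k - 1 \<and> indeg (symK k) w = k - 1"
      by (auto simp: symK_verts symK_deg)
    from iso_regular[OF f wG symK_wfa this]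
    have r: "(\<forall>v\<in>verts G. k - 1 \<le> outdeg G v \<and> k - 1 \<le> indeg G v)" by auto
    moreover have "Exc k G" using c3(2) by (simp add: Exc_def)
    ultimately show ?thesis by simp
  qed
qed



lemma direct_deg:
  assumes "A1 \<subseteq> V1 \<times> V1" "A2 \<subseteq> V2 \<times> V2" "V1 \<inter> V2 = {}" "finite V1" "v \<in> V1"
    "(fst e \<in> V1 \<and> snd e \<in> V2) \<or> (fst e \<in> V2 \<and> snd e \<in> V1)" "A = A1 \<union> A2 \<union> {e}"
  shows "outdeg (W, A) v = outdeg (V1, A1) v + (if fst e = v then 1 else 0)"
    "indeg (W, A) v = indeg (V1, A1) v + (if snd e = v then 1 else 0)"
proof -
  have S: "{w. (v,w) \<in> A1} \<subseteq> V1" "{w. (w,v) \<in> A1} \<subseteq> V1" using assms(1) by auto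
  have fin: "finite {w. (v,w) \<in> A1}" "finite {w. (w,v) \<in> A1}" using S assms(4) finite_subset by blast+
  have e1: "{w. (v,w) \<in> A} = {w. (v,w) \<in> A1} \<union> (if fst e = v then {snd e} else {})"
    using assms(2,3,5,7) by (cases e) auto
  have e2: "{w. (w,v) \<in> A} = {w. (w,v) \<in> A1} \<union> (if snd e = v then {fst e} else {})"
    using assms(2,3,5,7) by (cases e) auto
  show "outdeg (W, A) v = outdeg (V1, A1) v + (if fst e = v then 1 else 0)"
  proof (cases "fst e = v")
    case True
    then have "snd e \<notin> {w. (v,w) \<in> A1}" using S assms(3,5,6) by auto
    then show ?thesis using True fin by (simp add: outdeg_def arcs_def e1)
  next
    case False then show ?thesis by (simp add: outdeg_def arcs_def e1)
  qed
  show "indeg (W, A) v = indeg (V1, A1) v + (if snd e = v then 1 else 0)"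
  proof (cases "snd e = v")
    case True
    then have "fst e \<notin> {w. (w,v) \<in> A1}" using S assms(3,5,6) by auto
    then show ?thesis using True fin by (simp add: indeg_def arcs_def e2)
  next
    case False then show ?thesis by (simp add: indeg_def arcs_def e2)
  qed
qed

lemma pred_mod: assumes "i < l" "2 \<le> l"
  shows "(i + l - 1) mod l < l" "Suc ((i + l - 1) mod l) mod l = i" "(i + l - 1) mod l \<noteq> i"
    "\<And>j. j < l \<Longrightarrow> Suc j mod l = i \<Longrightarrow> j = (i + l - 1) mod l"
proof -
  show "(i + l - 1) mod l < l" using assms by simp
  show "Suc ((i + l - 1) mod l) mod l = i"
  proof (cases "i = 0")
    case True then show ?thesis using assms by simp
  next
    case False
    then have "(i + l - 1) mod l = i - 1" using assms
      by (metis Nat.add_diff_assoc2 add.commute le_add1 less_imp_diff_less mod_add_self2 mod_less not_gr_zero Suc_leI le_add_diff_inverse2 One_nat_def)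
    then show ?thesis using False assms by simp
  qed
  show "(i + l - 1) mod l \<noteq> i"
  proof (cases "i = 0")
    case True then show ?thesis using assms by simp
  next
    case False
    then have "(i + l - 1) mod l = i - 1" using assms
      by (metis Nat.add_diff_assoc2 add.commute le_add1 less_imp_diff_less mod_add_self2 mod_less not_gr_zero Suc_leI le_add_diff_inverse2 One_nat_def)
    then show ?thesis using False by simp
  qed
  fix j assume j: "j < l" "Suc j mod l = i"
  show "j = (i + l - 1) mod l"
  proof (cases "Suc j = l")
    case True
    then have "i = 0" using j by simp
    then show ?thesis using True by simp
  next
    case False
    then have "i = Suc j" using j by (simp add: mod_Suc)
    then show ?thesis using j by simp
  qed
qed

lemma suc_mod_ne: "(i::nat) < l \<Longrightarrow> 2 \<le> l \<Longrightarrow> (i + 1) mod l \<noteq> i \<and> (i + 1) mod l < l"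
  by (auto simp: mod_Suc)

lemma cyc_deg:
  fixes l i :: nat
  assumes l: "2 \<le> l" and As: "\<forall>i<l. As i \<subseteq> Vs i \<times> Vs i" and fin: "\<forall>i<l. finite (Vs i)"
    and vs: "\<forall>i<l. vs i \<in> Vs i" and dj: "\<forall>i<l. \<forall>j<l. i \<noteq> j \<longrightarrow> Vs i \<inter> Vs j = {}"
    and i: "i < l" and v: "v \<in> Vs i"
    and A: "A = (\<Union>i<l. As i) \<union> {(vs i, vs ((i + 1) mod l)) | i. i < l}"
  shows "outdeg (W, A) v = outdeg (Vs i, As i) v + (if v = vs i then 1 else 0)"
    "indeg (W, A) v = indeg (Vs i, As i) v + (if v = vs i then 1 else 0)"
proof -
  have idx: "\<And>j. j < l \<Longrightarrow> v \<in> Vs j \<Longrightarrow> j = i" using dj i v by blast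
  have S: "{w. (v,w) \<in> As i} \<subseteq> Vs i" "{w. (w,v) \<in> As i} \<subseteq> Vs i" using As i by auto
  have fS: "finite {w. (v,w) \<in> As i}" "finite {w. (w,v) \<in> As i}" using S fin i finite_subset by blast+
  define p where "p = (i + l - 1) mod l"
  note pm = pred_mod[OF i l, folded p_def]
  have sn: "(i + 1) mod l \<noteq> i" "(i + 1) mod l < l" using suc_mod_ne[OF i l] by auto
  have e1: "{w. (v,w) \<in> A} = {w. (v,w) \<in> As i} \<union> (if v = vs i then {vs ((i + 1) mod l)} else {})"
  proof (intro set_eqI iffI)
    fix w assume "w \<in> {w. (v,w) \<in> A}"
    then have "(v,w) \<in> A" by simp
    then consider j where "j < l" "(v,w) \<in> As j" | j where "j < l" "v = vs j" "w = vs ((j + 1) mod l)"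
      unfolding A by blast
    then show "w \<in> {w. (v,w) \<in> As i} \<union> (if v = vs i then {vs ((i + 1) mod l)} else {})"
    proof cases
      case 1
      then have "v \<in> Vs j" using As by blast
      then have "j = i" using idx 1 by blast
      then show ?thesis using 1 by simp
    next
      case 2
      then have "v \<in> Vs j" using vs by blast
      then have "j = i" using idx 2 by blast
      then show ?thesis using 2 by simp
    qed
  next
    fix w assume "w \<in> {w. (v,w) \<in> As i} \<union> (if v = vs i then {vs ((i + 1) mod l)} else {})"
    then show "w \<in> {w. (v,w) \<in> A}" unfolding A using i by (auto split: if_splits)
  qed
  have e2: "{w. (w,v) \<in> A} = {w. (w,v) \<in> As i} \<union> (if v = vs i then {vs p} else {})"
  proof (intro set_eqI iffI)
    fix w assume "w \<in> {w. (w,v) \<in> A}"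
    then have "(w,v) \<in> A" by simp
    then consider j where "j < l" "(w,v) \<in> As j" | j where "j < l" "w = vs j" "v = vs ((j + 1) mod l)"
      unfolding A by blast
    then show "w \<in> {w. (w,v) \<in> As i} \<union> (if v = vs i then {vs p} else {})"
    proof cases
      case 1
      then have "v \<in> Vs j" using As by blast
      then have "j = i" using idx 1 by blast
      then show ?thesis using 1 by simp
    next
      case 2
      have jl: "(j + 1) mod l < l" using l by simp
      then have "v \<in> Vs ((j + 1) mod l)" using vs 2 by blast
      then have ji: "(j + 1) mod l = i" using idx jl by blast
      then have "j = p" using pm(4)[of j] 2 by simp
      then show ?thesis using 2 ji by simp
    qed
  next
    fix w assume w: "w \<in> {w. (w,v) \<in> As i} \<union> (if v = vs i then {vs p} else {})"
    have "(vs p, vs ((p + 1) mod l)) \<in> {(vs i, vs ((i + 1) mod l)) | i. i < l}" using pm(1) by blast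
    then have "(vs p, vs i) \<in> A" unfolding A using pm(2) by simp
    then show "w \<in> {w. (w,v) \<in> A}" using w unfolding A using i by (auto split: if_splits)
  qed
  have n1: "vs ((i + 1) mod l) \<notin> Vs i" using vs dj sn i by blast
  have n2: "vs p \<notin> Vs i" using vs dj pm(1,3) i by blast
  show "outdeg (W, A) v = outdeg (Vs i, As i) v + (if v = vs i then 1 else 0)"
  proof -
    have "vs ((i + 1) mod l) \<notin> {w. (v,w) \<in> As i}" using n1 S by blast
    then show ?thesis using fS unfolding outdeg_def arcs_def snd_conv e1 by (cases "v = vs i") simp_all
  qed
  show "indeg (W, A) v = indeg (Vs i, As i) v + (if v = vs i then 1 else 0)"
  proof -
    have "vs p \<notin> {w. (w,v) \<in> As i}" using n2 S by blast
    then show ?thesis using fS unfolding indeg_def arcs_def snd_conv e2 by (cases "v = vs i") simp_all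
  qed
qed



lemma iso_reflect:
  assumes "iso_via f G (sympath n)"
  shows "iso_via (\<lambda>x. n - f x) G (sympath n)"
proof -
  have b: "bij_betw f (verts G) {0..n}" and ar: "\<forall>u\<in>verts G. \<forall>v\<in>verts G. (u, v) \<in> arcs G \<longleftrightarrow> (f u, f v) \<in> arcs (sympath n)"
    using assms by (auto simp: iso_via_def sympath_verts)
  have r: "bij_betw (\<lambda>i. n - i) {0..n} {0..n}"
  proof (rule bij_betw_imageI)
    show "inj_on (\<lambda>i. n - i) {0..n}" by (auto simp: inj_on_def)
    show "(\<lambda>i. n - i) ` {0..n} = {0..n}"
    proof
      show "(\<lambda>i. n - i) ` {0..n} \<subseteq> {0..n}" by auto
      show "{0..n} \<subseteq> (\<lambda>i. n - i) ` {0..n}"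
      proof
        fix x assume "x \<in> {0..n}" then show "x \<in> (\<lambda>i. n - i) ` {0..n}"
          by (intro image_eqI[of _ _ "n - x"]) auto
      qed
    qed
  qed
  have "bij_betw ((\<lambda>i. n - i) \<circ> f) (verts G) {0..n}" by (rule bij_betw_trans[OF b r])
  then have b2: "bij_betw (\<lambda>x. n - f x) (verts G) {0..n}" by (simp add: comp_def)
  have fl: "\<And>u. u \<in> verts G \<Longrightarrow> f u \<le> n" using b by (auto simp: bij_betw_def)
  have "\<forall>u\<in>verts G. \<forall>v\<in>verts G. (u, v) \<in> arcs G \<longleftrightarrow> (n - f u, n - f v) \<in> arcs (sympath n)"
  proof (intro ballI)
    fix u v assume u: "u \<in> verts G" and v: "v \<in> verts G"
    have "(f u, f v) \<in> arcs (sympath n) \<longleftrightarrow> (n - f u, n - f v) \<in> arcs (sympath n)"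
      using fl[OF u] fl[OF v] by (auto simp: sympath_arcs)
    then show "(u, v) \<in> arcs G \<longleftrightarrow> (n - f u, n - f v) \<in> arcs (sympath n)" using ar u v by simp
  qed
  then show ?thesis using b2 by (simp add: iso_via_def sympath_verts)
qed

lemma endpoint:
  assumes "iso_via f G (sympath n)" "wfa G" "v \<in> verts G" "outdeg G v \<le> 1"
  shows "f v = 0 \<or> f v = n"
proof (rule ccontr)
  assume c: "\<not> (f v = 0 \<or> f v = n)"
  have "f v \<le> n" using assms(1,3) by (auto simp: iso_via_def bij_betw_def sympath_verts)
  then have "outdeg (sympath n) (f v) = 2" using c sp_mid by simp
  then show False using iso_out[OF assms(1,2) sympath_wfa assms(3)] assms(4) by simp
qed

lemma join_paths:
  assumes f0: "iso_via f0 (V0, A0) (sympath n0)" and f1: "iso_via f1 (V1, A1) (sympath n1)"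
    and dj: "V0 \<inter> V1 = {}" and A0: "A0 \<subseteq> V0 \<times> V0" and A1: "A1 \<subseteq> V1 \<times> V1"
    and a: "a \<in> V0" and b: "b \<in> V1" and fa: "f0 a = n0" and fb: "f1 b = 0"
  shows "dg_iso (V0 \<union> V1, A0 \<union> A1 \<union> {(a,b),(b,a)}) (sympath (n0 + n1 + 1))"
proof -
  define g where "g x = (if x \<in> V0 then f0 x else n0 + 1 + f1 x)" for x
  have b0: "bij_betw f0 V0 {0..n0}" and ar0: "\<forall>u\<in>V0. \<forall>v\<in>V0. (u, v) \<in> A0 \<longleftrightarrow> (f0 u, f0 v) \<in> arcs (sympath n0)"
    using f0 by (auto simp: iso_via_def sympath_verts)
  have b1: "bij_betw f1 V1 {0..n1}" and ar1: "\<forall>u\<in>V1. \<forall>v\<in>V1. (u, v) \<in> A1 \<longleftrightarrow> (f1 u, f1 v) \<in> arcs (sympath n1)"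
    using f1 by (auto simp: iso_via_def sympath_verts)
  have l0: "\<And>x. x \<in> V0 \<Longrightarrow> f0 x \<le> n0" using b0 by (auto simp: bij_betw_def)
  have l1: "\<And>x. x \<in> V1 \<Longrightarrow> f1 x \<le> n1" using b1 by (auto simp: bij_betw_def)
  have i0: "inj_on f0 V0" and i1: "inj_on f1 V1" using b0 b1 by (auto simp: bij_betw_def)
  have nV1: "\<And>x. x \<in> V1 \<Longrightarrow> x \<notin> V0" using dj by blast
  have bij: "bij_betw g (V0 \<union> V1) {0..n0 + n1 + 1}"
  proof (rule bij_betw_imageI)
    show "inj_on g (V0 \<union> V1)"
    proof (rule inj_onI)
      fix x y assume x: "x \<in> V0 \<union> V1" and y: "y \<in> V0 \<union> V1" and e: "g x = g y"
      show "x = y"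
      proof (cases "x \<in> V0"; cases "y \<in> V0")
        assume "x \<in> V0" "y \<in> V0" then show ?thesis using e i0 by (auto simp: g_def inj_on_def)
      next
        assume "x \<in> V0" "y \<notin> V0" then show ?thesis using e l0[of x] by (auto simp: g_def)
      next
        assume "x \<notin> V0" "y \<in> V0" then show ?thesis using e l0[of y] by (auto simp: g_def)
      next
        assume "x \<notin> V0" "y \<notin> V0" then show ?thesis using e i1 x y by (auto simp: g_def inj_on_def)
      qed
    qed
    show "g ` (V0 \<union> V1) = {0..n0 + n1 + 1}"
    proof
      show "g ` (V0 \<union> V1) \<subseteq> {0..n0 + n1 + 1}"
      proof (rule image_subsetI)
        fix x assume "x \<in> V0 \<union> V1"
        then show "g x \<in> {0..n0 + n1 + 1}" using l0[of x] l1[of x] by (cases "x \<in> V0") (auto simp: g_def)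
      qed
      show "{0..n0 + n1 + 1} \<subseteq> g ` (V0 \<union> V1)"
      proof
        fix m assume m: "m \<in> {0..n0 + n1 + 1}"
        show "m \<in> g ` (V0 \<union> V1)"
        proof (cases "m \<le> n0")
          case True
          then obtain x where "x \<in> V0" "f0 x = m" using b0 by (force simp: bij_betw_def)
          then show ?thesis by (auto simp: g_def)
        next
          case False
          then have "m - (n0 + 1) \<in> {0..n1}" using m by auto
          then obtain x where x: "x \<in> V1" "f1 x = m - (n0 + 1)" using b1 by (force simp: bij_betw_def)
          then have "g x = m" using nV1 False by (simp add: g_def)
          then show ?thesis using x by blast
        qed
      qed
    qed
  qed
  have arcs_ok: "\<forall>u\<in>V0 \<union> V1. \<forall>v\<in>V0 \<union> V1. (u, v) \<in> A0 \<union> A1 \<union> {(a,b),(b,a)} \<longleftrightarrow> (g u, g v) \<in> arcs (sympath (n0 + n1 + 1))"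
  proof (intro ballI)
    fix u v assume u: "u \<in> V0 \<union> V1" and v: "v \<in> V0 \<union> V1"
    show "(u, v) \<in> A0 \<union> A1 \<union> {(a,b),(b,a)} \<longleftrightarrow> (g u, g v) \<in> arcs (sympath (n0 + n1 + 1))"
    proof (cases "u \<in> V0"; cases "v \<in> V0")
      assume uv: "u \<in> V0" "v \<in> V0"
      then have "(u, v) \<in> A0 \<union> A1 \<union> {(a,b),(b,a)} \<longleftrightarrow> (u,v) \<in> A0" using A1 b nV1 by blast
      also have "\<dots> \<longleftrightarrow> (f0 u, f0 v) \<in> arcs (sympath n0)" using ar0 uv by blast
      also have "\<dots> \<longleftrightarrow> (g u, g v) \<in> arcs (sympath (n0 + n1 + 1))"
        using uv l0[OF uv(1)] l0[OF uv(2)] by (auto simp: g_def sympath_arcs)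
      finally show ?thesis .
    next
      assume uv: "u \<in> V0" "v \<notin> V0"
      then have v1: "v \<in> V1" using v by blast
      have "(u, v) \<in> A0 \<union> A1 \<union> {(a,b),(b,a)} \<longleftrightarrow> u = a \<and> v = b" using A0 A1 uv v1 nV1 a by blast
      also have "\<dots> \<longleftrightarrow> f0 u = n0 \<and> f1 v = 0" using i0 i1 uv v1 a b fa fb by (auto simp: inj_on_def)
      also have "\<dots> \<longleftrightarrow> (g u, g v) \<in> arcs (sympath (n0 + n1 + 1))"
        using uv l0[OF uv(1)] l1[OF v1] by (auto simp: g_def sympath_arcs)
      finally show ?thesis .
    next
      assume uv: "u \<notin> V0" "v \<in> V0"
      then have u1: "u \<in> V1" using u by blast
      have "(u, v) \<in> A0 \<union> A1 \<union> {(a,b),(b,a)} \<longleftrightarrow> u = b \<and> v = a" using A0 A1 uv u1 nV1 a by blast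
      also have "\<dots> \<longleftrightarrow> f0 v = n0 \<and> f1 u = 0" using i0 i1 uv u1 a b fa fb by (auto simp: inj_on_def)
      also have "\<dots> \<longleftrightarrow> (g u, g v) \<in> arcs (sympath (n0 + n1 + 1))"
        using uv l0[OF uv(2)] l1[OF u1] by (auto simp: g_def sympath_arcs)
      finally show ?thesis .
    next
      assume uv: "u \<notin> V0" "v \<notin> V0"
      then have uv1: "u \<in> V1" "v \<in> V1" using u v by blast+
      then have "(u, v) \<in> A0 \<union> A1 \<union> {(a,b),(b,a)} \<longleftrightarrow> (u,v) \<in> A1" using A0 a uv by blast
      also have "\<dots> \<longleftrightarrow> (f1 u, f1 v) \<in> arcs (sympath n1)" using ar1 uv1 by blast
      also have "\<dots> \<longleftrightarrow> (g u, g v) \<in> arcs (sympath (n0 + n1 + 1))"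
        using uv l1[OF uv1(1)] l1[OF uv1(2)] by (auto simp: g_def sympath_arcs)
      finally show ?thesis .
    qed
  qed
  have "iso_via g (V0 \<union> V1, A0 \<union> A1 \<union> {(a,b),(b,a)}) (sympath (n0 + n1 + 1))"
    using bij arcs_ok by (simp add: iso_via_def sympath_verts)
  then show ?thesis by (auto simp: dg_iso_via)
qed



lemma delta_bound:
  assumes "dg_wf G" "Delta_max G \<le> k" "v \<in> verts G"
  shows "outdeg G v \<le> k" "indeg G v \<le> k"
proof -
  have f: "finite (insert 0 ((\<lambda>v. max (outdeg G v) (indeg G v)) ` verts G))"
    using assms(1) by (simp add: dg_wf_def)
  have "max (outdeg G v) (indeg G v) \<le> Delta_max G"
    unfolding Delta_max_def using assms(3) by (intro Max_ge[OF f]) auto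
  then show "outdeg G v \<le> k" "indeg G v \<le> k" using assms(2) by auto
qed

lemma sym_deg:
  assumes "\<forall>a b. (a,b)\<in>arcs G \<longrightarrow> (b,a)\<in>arcs G"
  shows "outdeg G v = indeg G v"
proof -
  have "{w. (v,w) \<in> arcs G} = {w. (w,v) \<in> arcs G}" using assms by blast
  then show ?thesis by (simp add: outdeg_def indeg_def)
qed

lemma direct_side:
  assumes w1: "dg_wf (V1, A1)" and w2: "dg_wf (V2, A2)" and dj: "V1 \<inter> V2 = {}"
    and v1: "v1 \<in> V1" and v2: "v2 \<in> V2" and e: "e = (v1, v2) \<or> e = (v2, v1)"
    and A: "A = A1 \<union> A2 \<union> {e}" and k: "k \<ge> 2"
    and deg: "\<forall>v\<in>V1. k - 1 \<le> outdeg (V1, A1) v \<and> k - 1 \<le> indeg (V1, A1) v"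
    and cnt: "k + 1 \<le> card (low k (V1, A1)) \<or> Exc k (V1, A1)"
  shows "(\<forall>v\<in>V1. k - 1 \<le> outdeg (W, A) v \<and> k - 1 \<le> indeg (W, A) v) \<and>
         (\<exists>D \<subseteq> V1. k \<le> card D \<and> (\<forall>v\<in>D. mindeg (W, A) v = k - 1))"
proof -
  have A1: "A1 \<subseteq> V1 \<times> V1" and f1: "finite V1" using w1 by (auto simp: dg_wf_def)
  have A2: "A2 \<subseteq> V2 \<times> V2" using w2 by (auto simp: dg_wf_def)
  have ee: "(fst e \<in> V1 \<and> snd e \<in> V2) \<or> (fst e \<in> V2 \<and> snd e \<in> V1)" using e v1 v2 by auto
  have dd: "\<And>v. v \<in> V1 \<Longrightarrow> outdeg (W, A) v = outdeg (V1, A1) v + (if fst e = v then 1 else 0) \<and>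
      indeg (W, A) v = indeg (V1, A1) v + (if snd e = v then 1 else 0)"
    using direct_deg[OF A1 A2 dj f1 _ ee A] by blast
  have fe: "\<And>v. v \<in> V1 \<Longrightarrow> fst e = v \<Longrightarrow> v = v1" "\<And>v. v \<in> V1 \<Longrightarrow> snd e = v \<Longrightarrow> v = v1"
    using e dj v1 v2 by auto
  have nb: "\<And>v. v \<in> V1 \<Longrightarrow> \<not> (fst e = v \<and> snd e = v)" using e dj v1 v2 by auto
  have part1: "\<forall>v\<in>V1. k - 1 \<le> outdeg (W, A) v \<and> k - 1 \<le> indeg (W, A) v"
  proof
    fix v assume "v \<in> V1" then show "k - 1 \<le> outdeg (W, A) v \<and> k - 1 \<le> indeg (W, A) v"
      using dd[of v] deg by fastforce
  qed
  define L where "L = low k (V1, A1)"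
  have LV: "L \<subseteq> V1" by (auto simp: L_def low_def)
  have fL: "finite L" using LV f1 finite_subset by blast
  define D where "D = (if Exc k (V1, A1) then L else L - {v1})"
  have DL: "D \<subseteq> L" by (auto simp: D_def)
  have cD: "k \<le> card D"
  proof (cases "Exc k (V1, A1)")
    case True
    then show ?thesis using Exc_props[OF w1 True k] by (simp add: D_def L_def)
  next
    case False
    then have "k + 1 \<le> card L" using cnt by (simp add: L_def)
    moreover have "card L - 1 \<le> card (L - {v1})" by (simp add: card_Diff_singleton_if)
    ultimately show ?thesis using False by (simp add: D_def)
  qed
  have mD: "\<forall>v\<in>D. mindeg (W, A) v = k - 1"
  proof
    fix v assume vD: "v \<in> D"
    then have vV: "v \<in> V1" and m1: "mindeg (V1, A1) v = k - 1" using DL LV by (auto simp: L_def low_def)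
    show "mindeg (W, A) v = k - 1"
    proof (cases "v = v1")
      case False
      then have "fst e \<noteq> v" "snd e \<noteq> v" using fe vV by blast+
      then show ?thesis using dd[OF vV] m1 by (simp add: mindeg_def)
    next
      case True
      then have ex: "Exc k (V1, A1)" using vD by (auto simp: D_def split: if_splits)
      have "outdeg (V1, A1) v = indeg (V1, A1) v"
        by (rule sym_deg) (use Exc_props[OF w1 ex k] in simp)
      then have "outdeg (V1, A1) v = k - 1" "indeg (V1, A1) v = k - 1" using m1 by (auto simp: mindeg_def)
      then show ?thesis using dd[OF vV] nb[OF vV] by (auto simp: mindeg_def)
    qed
  qed
  have "D \<subseteq> V1" using DL LV by (rule subset_trans)
  then have "\<exists>D \<subseteq> V1. k \<le> card D \<and> (\<forall>v\<in>D. mindeg (W, A) v = k - 1)"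
    using cD mD by blast
  then show ?thesis using part1 by simp
qed



lemma lt2: "{..<(2::nat)} = {0, 1}" by auto

lemma main_lemma:
  assumes "ktree k G" "k \<ge> 2"
  shows "dg_wf G \<and> (\<forall>v\<in>verts G. k - 1 \<le> outdeg G v \<and> k - 1 \<le> indeg G v) \<and>
         (k + 1 \<le> card (low k G) \<or> Exc k G)"
  using assms(1)
proof (induction G rule: ktree.induct)
  case (base G)
  then show ?case using base_case[OF _ _ assms(2)] by blast
next
  case (direct V1 A1 V2 A2 v1 v2 e)
  have I1: "dg_wf (V1, A1)" "\<forall>v\<in>V1. k - 1 \<le> outdeg (V1, A1) v \<and> k - 1 \<le> indeg (V1, A1) v"
    "k + 1 \<le> card (low k (V1, A1)) \<or> Exc k (V1, A1)" using direct.IH(1) by auto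
  have I2: "dg_wf (V2, A2)" "\<forall>v\<in>V2. k - 1 \<le> outdeg (V2, A2) v \<and> k - 1 \<le> indeg (V2, A2) v"
    "k + 1 \<le> card (low k (V2, A2)) \<or> Exc k (V2, A2)" using direct.IH(2) by auto
  note dj = direct.hyps(3) and v1 = direct.hyps(4) and v2 = direct.hyps(5) and e = direct.hyps(6)
  have dj': "V2 \<inter> V1 = {}" using dj by blast
  have e': "e = (v2, v1) \<or> e = (v1, v2)" using e by blast
  have A': "A1 \<union> A2 \<union> {e} = A2 \<union> A1 \<union> {e}" by blast
  note s1 = direct_side[OF I1(1) I2(1) dj v1 v2 e refl assms(2) I1(2) I1(3), of "V1 \<union> V2"]
  note s2 = direct_side[OF I2(1) I1(1) dj' v2 v1 e' A' assms(2) I2(2) I2(3), of "V1 \<union> V2"]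
  let ?G = "(V1 \<union> V2, A1 \<union> A2 \<union> {e})"
  have wf: "dg_wf ?G"
  proof -
    have "finite (V1 \<union> V2)" using I1(1) I2(1) by (simp add: dg_wf_def)
    moreover have "A1 \<union> A2 \<union> {e} \<subseteq> (V1 \<union> V2) \<times> (V1 \<union> V2)" using I1(1) I2(1) e v1 v2
      by (auto simp: dg_wf_def)
    moreover have "\<forall>v. (v, v) \<notin> A1 \<union> A2 \<union> {e}" using I1(1) I2(1) e v1 v2 dj
      by (auto simp: dg_wf_def)
    ultimately show ?thesis by (simp add: dg_wf_def)
  qed
  have degs: "\<forall>v\<in>verts ?G. k - 1 \<le> outdeg ?G v \<and> k - 1 \<le> indeg ?G v"
    using s1 s2 by auto
  obtain D1 where D1: "D1 \<subseteq> V1" "k \<le> card D1" "\<forall>v\<in>D1. mindeg ?G v = k - 1" using s1 by blast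
  obtain D2 where D2: "D2 \<subseteq> V2" "k \<le> card D2" "\<forall>v\<in>D2. mindeg ?G v = k - 1"
    using s2 by (auto simp: A')
  have fin1: "finite D1" using D1(1) I1(1) finite_subset by (auto simp: dg_wf_def)
  have fin2: "finite D2" using D2(1) I2(1) finite_subset by (auto simp: dg_wf_def)
  have sub: "D1 \<union> D2 \<subseteq> low k ?G" using D1 D2 by (auto simp: low_def)
  have finL: "finite (low k ?G)" using wf by (auto simp: low_def dg_wf_def)
  have "card (D1 \<union> D2) = card D1 + card D2" using fin1 fin2 D1(1) D2(1) dj
    by (intro card_Un_disjoint) auto
  then have "2 * k \<le> card (low k ?G)" using card_mono[OF finL sub] D1(2) D2(2) by linarith
  then have "k + 1 \<le> card (low k ?G)" using assms(2) by linarith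
  then show ?case using wf degs by simp
next
  case (cyclic l Vs As vs G)
  note l = cyclic.hyps(1) and vs = cyclic.hyps(2) and dj = cyclic.hyps(3) and Geq = cyclic.hyps(4) and Dl = cyclic.hyps(5)
  have IH: "\<And>i. i < l \<Longrightarrow> dg_wf (Vs i, As i) \<and> (\<forall>v\<in>Vs i. k - 1 \<le> outdeg (Vs i, As i) v \<and> k - 1 \<le> indeg (Vs i, As i) v)
      \<and> (k + 1 \<le> card (low k (Vs i, As i)) \<or> Exc k (Vs i, As i))"
    using cyclic.IH by auto
  define W where "W = (\<Union>i<l. Vs i)"
  define A where "A = (\<Union>i<l. As i) \<union> {(vs i, vs ((i + 1) mod l)) | i. i < l}"
  have G: "G = (W, A)" using Geq by (simp add: W_def A_def)
  have As: "\<forall>i<l. As i \<subseteq> Vs i \<times> Vs i" and fin: "\<forall>i<l. finite (Vs i)"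
    using IH by (auto simp: dg_wf_def)
  have cd: "\<And>i v. i < l \<Longrightarrow> v \<in> Vs i \<Longrightarrow> outdeg G v = outdeg (Vs i, As i) v + (if v = vs i then 1 else 0)
      \<and> indeg G v = indeg (Vs i, As i) v + (if v = vs i then 1 else 0)"
    using cyc_deg[OF l As fin vs dj _ _ A_def] G by simp
  have wf: "dg_wf G"
  proof -
    have "finite W" using fin by (simp add: W_def)
    moreover have "A \<subseteq> W \<times> W"
    proof
      fix x assume "x \<in> A"
      then consider i where "i < l" "x \<in> As i" | i where "i < l" "x = (vs i, vs ((i + 1) mod l))"
        unfolding A_def by blast
      then show "x \<in> W \<times> W"
      proof cases
        case 1 then show ?thesis using As unfolding W_def by blast
      next
        case 2
        have "(i + 1) mod l < l" using l by simp
        then show ?thesis using 2 vs unfolding W_def by blast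
      qed
    qed
    moreover have "\<forall>v. (v, v) \<notin> A"
    proof (intro allI notI)
      fix v assume "(v, v) \<in> A"
      then consider i where "i < l" "(v, v) \<in> As i" | i where "i < l" "v = vs i" "v = vs ((i + 1) mod l)"
        unfolding A_def by blast
      then show False
      proof cases
        case 1 then show ?thesis using IH[of i] by (auto simp: dg_wf_def)
      next
        case 2
        have sn: "(i + 1) mod l \<noteq> i" "(i + 1) mod l < l" using suc_mod_ne[OF 2(1) l] by auto
        have d: "Vs i \<inter> Vs ((i + 1) mod l) = {}" using dj[rule_format, OF 2(1) sn(2)] sn(1) by simp
        have "vs i \<in> Vs i" "vs ((i + 1) mod l) \<in> Vs ((i + 1) mod l)" using vs 2(1) sn(2) by auto
        then show ?thesis using 2 d by auto
      qed
    qed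
    ultimately show ?thesis using G by (simp add: dg_wf_def)
  qed
  have inW: "\<And>v. v \<in> verts G \<Longrightarrow> \<exists>i<l. v \<in> Vs i" using G by (auto simp: W_def)
  have degs: "\<forall>v\<in>verts G. k - 1 \<le> outdeg G v \<and> k - 1 \<le> indeg G v"
  proof
    fix v assume "v \<in> verts G"
    then obtain i where i: "i < l" "v \<in> Vs i" using inW by blast
    then show "k - 1 \<le> outdeg G v \<and> k - 1 \<le> indeg G v" using cd[OF i] IH[OF i(1)] by fastforce
  qed
  define L where "L i = low k (Vs i, As i) - {vs i}" for i
  have lowG: "low k G = (\<Union>i<l. L i)"
  proof (intro set_eqI iffI)
    fix v assume "v \<in> low k G"
    then have v: "v \<in> verts G" "mindeg G v = k - 1" by (auto simp: low_def)
    then obtain i where i: "i < l" "v \<in> Vs i" using inW by blast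
    have "k - 1 \<le> mindeg (Vs i, As i) v" using IH[OF i(1)] i(2) by (auto simp: mindeg_def)
    then have "v \<noteq> vs i \<and> mindeg (Vs i, As i) v = k - 1" using cd[OF i] v(2) assms(2)
      by (auto simp: mindeg_def split: if_splits)
    then show "v \<in> (\<Union>i<l. L i)" using i by (auto simp: L_def low_def)
  next
    fix v assume "v \<in> (\<Union>i<l. L i)"
    then obtain i where i: "i < l" "v \<in> Vs i" "v \<noteq> vs i" "mindeg (Vs i, As i) v = k - 1"
      by (auto simp: L_def low_def)
    then have "mindeg G v = k - 1" using cd[OF i(1,2)] by (simp add: mindeg_def)
    moreover have "v \<in> verts G" using G i by (auto simp: W_def)
    ultimately show "v \<in> low k G" by (simp add: low_def)
  qed
  have finL: "\<And>i. i < l \<Longrightarrow> finite (L i)" using fin by (auto simp: L_def low_def)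
  have cardG: "card (low k G) = (\<Sum>i<l. card (L i))"
    unfolding lowG
  proof (rule card_UN_disjoint)
    show "finite {..<l}" by simp
    show "\<forall>i\<in>{..<l}. finite (L i)" using finL by simp
    show "\<forall>i\<in>{..<l}. \<forall>j\<in>{..<l}. i \<noteq> j \<longrightarrow> L i \<inter> L j = {}"
    proof (intro ballI impI)
      fix i j assume "i \<in> {..<l}" "j \<in> {..<l}" "i \<noteq> j"
      then have "Vs i \<inter> Vs j = {}" using dj by simp
      then show "L i \<inter> L j = {}" by (auto simp: L_def low_def)
    qed
  qed
  have cL: "\<And>i. i < l \<Longrightarrow> k - 1 \<le> card (L i) \<and> (\<not> Exc k (Vs i, As i) \<longrightarrow> k \<le> card (L i))"
  proof -
    fix i assume i: "i < l"
    have "card (low k (Vs i, As i)) - 1 \<le> card (L i)" by (simp add: L_def card_Diff_singleton_if)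
    moreover have "k \<le> card (low k (Vs i, As i))" "\<not> Exc k (Vs i, As i) \<longrightarrow> k + 1 \<le> card (low k (Vs i, As i))"
      using IH[OF i] Exc_props[of "(Vs i, As i)" k] assms(2) by auto
    ultimately show "k - 1 \<le> card (L i) \<and> (\<not> Exc k (Vs i, As i) \<longrightarrow> k \<le> card (L i))" by auto
  qed
  show ?case
  proof (cases "k \<ge> 3 \<or> l \<ge> 3")
    case True
    have "(\<Sum>i<l. k - 1) \<le> (\<Sum>i<l. card (L i))" using cL by (intro sum_mono) auto
    then have "l * (k - 1) \<le> card (low k G)" using cardG by simp
    moreover have "k + 1 \<le> l * (k - 1)"
    proof (cases "k \<ge> 3")
      case True
      have "2 * (k - 1) \<le> l * (k - 1)" using l by (intro mult_right_mono) auto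
      then show ?thesis using True by linarith
    next
      case False
      then have "k = 2" "l \<ge> 3" using \<open>k \<ge> 3 \<or> l \<ge> 3\<close> assms(2) by auto
      then show ?thesis by simp
    qed
    ultimately show ?thesis using wf degs by simp
  next
    case False
    then have k2: "k = 2" and l2: "l = 2" using assms(2) l by auto
    have c01: "card (low k G) = card (L 0) + card (L 1)" using cardG l2 by (simp add: lt2)
    show ?thesis
    proof (cases "Exc k (Vs 0, As 0) \<and> Exc k (Vs 1, As 1)")
      case False
      then have "k + 1 \<le> card (low k G)" using cL[of 0] cL[of 1] l2 k2 c01 by auto
      then show ?thesis using wf degs by simp
    next
      case True
      obtain n0 f0 where n0: "odd n0" and f0: "iso_via f0 (Vs 0, As 0) (sympath n0)"
        using Exc2[of "(Vs 0, As 0)"] True k2 by (auto simp: dg_iso_via)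
      obtain n1 f1 where n1: "odd n1" and f1: "iso_via f1 (Vs 1, As 1) (sympath n1)"
        using Exc2[of "(Vs 1, As 1)"] True k2 by (auto simp: dg_iso_via)
      have w0: "wfa (Vs 0, As 0)" and w1: "wfa (Vs 1, As 1)" using IH[of 0] IH[of 1] l2 dg_wf_wfa by auto
      have vs0: "vs 0 \<in> Vs 0" and vs1: "vs 1 \<in> Vs 1" using vs l2 by auto
      have "vs 0 \<in> verts G" using G vs0 l2 by (auto simp: W_def)
      then have "outdeg G (vs 0) \<le> 2" using delta_bound[OF wf Dl] k2 by auto
      then have o0: "outdeg (Vs 0, As 0) (vs 0) \<le> 1" using cd[of 0 "vs 0"] vs0 l2 by simp
      have "vs 1 \<in> verts G" using G vs1 l2 by (auto simp: W_def)
      then have "outdeg G (vs 1) \<le> 2" using delta_bound[OF wf Dl] k2 by auto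
      then have o1: "outdeg (Vs 1, As 1) (vs 1) \<le> 1" using cd[of 1 "vs 1"] vs1 l2 by simp
      have ep0: "f0 (vs 0) = 0 \<or> f0 (vs 0) = n0" using endpoint[OF f0 w0 _ o0] vs0 by simp
      have ep1: "f1 (vs 1) = 0 \<or> f1 (vs 1) = n1" using endpoint[OF f1 w1 _ o1] vs1 by simp
      obtain g0 where g0: "iso_via g0 (Vs 0, As 0) (sympath n0)" "g0 (vs 0) = n0"
      proof (cases "f0 (vs 0) = n0")
        case True then show ?thesis using that f0 by blast
      next
        case False then show ?thesis using that[OF iso_reflect[OF f0]] ep0 by simp
      qed
      obtain g1 where g1: "iso_via g1 (Vs 1, As 1) (sympath n1)" "g1 (vs 1) = 0"
      proof (cases "f1 (vs 1) = 0")
        case True then show ?thesis using that f1 by blast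
      next
        case False then show ?thesis using that[OF iso_reflect[OF f1]] ep1 by simp
      qed
      have dj01: "Vs 0 \<inter> Vs 1 = {}" using dj l2 by auto
      have A0: "As 0 \<subseteq> Vs 0 \<times> Vs 0" and A1: "As 1 \<subseteq> Vs 1 \<times> Vs 1" using As l2 by auto
      have "G = (Vs 0 \<union> Vs 1, As 0 \<union> As 1 \<union> {(vs 0, vs 1), (vs 1, vs 0)})"
      proof -
        have "W = Vs 0 \<union> Vs 1" unfolding W_def l2 lt2 by auto
        moreover have "{(vs i, vs ((i + 1) mod l)) | i. i < l} = {(vs 0, vs 1), (vs 1, vs 0)}"
          unfolding l2 by (auto simp: less_2_cases_iff)
        then have "A = As 0 \<union> As 1 \<union> {(vs 0, vs 1), (vs 1, vs 0)}" unfolding A_def l2 lt2 by auto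
        ultimately show ?thesis using G by simp
      qed
      then have "dg_iso G (sympath (n0 + n1 + 1))"
        using join_paths[OF g0(1) g1(1) dj01 A0 A1 vs0 vs1 g0(2) g1(2)] by simp
      moreover have "odd (n0 + n1 + 1)" using n0 n1 by simp
      ultimately have "Exc k G" using k2 unfolding Exc_def by blast
      then show ?thesis using wf degs by simp
    qed
  qed
qed


theorem mainTheorem4:
  fixes k :: nat and G :: "'a digraph"
  assumes "k \<ge> 2" and "ktree k G"
  shows "(\<forall>v\<in>verts G. mindeg G v \<ge> k - 1) \<and>
         (card {v\<in>verts G. mindeg G v = k - 1} \<ge> k + 1 \<or>
          dg_iso G (symK k) \<or>
          (k = 2 \<and> (\<exists>n. odd n \<and> dg_iso G (sympath n))))"
proof -
  have M: "dg_wf G \<and> (\<forall>v\<in>verts G. k - 1 \<le> outdeg G v \<and> k - 1 \<le> indeg G v) \<and>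
         (k + 1 \<le> card (low k G) \<or> Exc k G)"
    using main_lemma[OF assms(2) assms(1)] .
  then have "\<forall>v\<in>verts G. mindeg G v \<ge> k - 1" by (auto simp: mindeg_def)
  moreover have "card {v\<in>verts G. mindeg G v = k - 1} \<ge> k + 1 \<or>
          dg_iso G (symK k) \<or> (k = 2 \<and> (\<exists>n. odd n \<and> dg_iso G (sympath n)))"
    using M unfolding low_def Exc_def by blast
  ultimately show ?thesis by blast
qed

end
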